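(* Let $\tau>0$, $\zeta\in\mathbb{C}$, $\sigma\in\{1,-1\}$, $q\in\mathbb{C}$, and set $$A=\begin{pmatrix}-i\zeta&0\\0&i\zeta\end{pmatrix},\qquad B=\begin{pmatrix}0&q\\-\sigma\overline{q}&0\end{pmatrix}.$$ Consider the 11-factor product $$P=e^{\frac{7}{48}\tau B}e^{\frac{1}{3}\tau A}e^{\frac{3}{8}\tau B}e^{-\frac{1}{3}\tau A}e^{-\frac{1}{48}\tau B}e^{\tau A}e^{-\frac{1}{48}\tau B}e^{-\frac{1}{3}\tau A}e^{\frac{3}{8}\tau B}e^{\frac{1}{3}\tau A}e^{\frac{7}{48}\tau B}.$$ Let $Z=e^{-i\tau\zeta/3}$ and $W=Z^2$. Then $P=Z^{-7}\,\hat S(W)$, where $\hat S(W)$ is a $2\times 2$ matrix whose entries are polynomials in $W$ of degree at most $7$ with coefficients independent of $\zeta$ (depending only on $\tau,q,\sigma$). Equivalently, $P=Z^{-7}S(Z)$ with $S$ a matrix polynomial in $Z$ of degree at most $14$ containing only even powers of $Z$.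
   Context: $\overline{q}$ denotes the complex conjugate of $q$; $e^{M}$ denotes the matrix exponential. *)

theory Defs
  imports "HOL-Analysis.Analysis"
begin

type_synonym cmat2 = "complex^2^2"

primrec mpow :: "'a::comm_ring_1^'n^'n \<Rightarrow> nat \<Rightarrow> 'a^'n^'n" where
  "mpow M 0 = mat 1"
| "mpow M (Suc k) = M ** mpow M k"

definition mexp :: "complex^'n^'n \<Rightarrow> complex^'n^'n" where
  "mexp M = (\<Sum>k. (1 / fact k) *\<^sub>R mpow M k)"

definition cscale :: "complex \<Rightarrow> complex^'n^'m \<Rightarrow> complex^'n^'m" where
  "cscale c M = (\<chi> i j. c * M $ i $ j)"

definition matA :: "complex \<Rightarrow> cmat2" where
  "matA \<zeta> = (\<chi> i j. if i = 1 \<and> j = 1 then - \<i> * \<zeta>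
                     else if i = 2 \<and> j = 2 then \<i> * \<zeta> else 0)"

definition matB :: "complex \<Rightarrow> real \<Rightarrow> cmat2" where
  "matB q \<sigma> = (\<chi> i j. if i = 1 \<and> j = 2 then q
                     else if i = 2 \<and> j = 1 then - (of_real \<sigma>) * cnj q else 0)"

definition prodP :: "real \<Rightarrow> complex \<Rightarrow> complex \<Rightarrow> real \<Rightarrow> cmat2" where
  "prodP \<tau> \<zeta> q \<sigma> =
     mexp (( 7/48 * \<tau>) *\<^sub>R matB q \<sigma>) **
     mexp (( 1/3  * \<tau>) *\<^sub>R matA \<zeta>) **
     mexp (( 3/8  * \<tau>) *\<^sub>R matB q \<sigma>) **
     mexp ((-1/3  * \<tau>) *\<^sub>R matA \<zeta>) **
     mexp ((-1/48 * \<tau>) *\<^sub>R matB q \<sigma>) **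
     mexp (\<tau> *\<^sub>R matA \<zeta>) **
     mexp ((-1/48 * \<tau>) *\<^sub>R matB q \<sigma>) **
     mexp ((-1/3  * \<tau>) *\<^sub>R matA \<zeta>) **
     mexp (( 3/8  * \<tau>) *\<^sub>R matB q \<sigma>) **
     mexp (( 1/3  * \<tau>) *\<^sub>R matA \<zeta>) **
     mexp (( 7/48 * \<tau>) *\<^sub>R matB q \<sigma>)"

end

theory Submission
  imports Defs "HOL-Computational_Algebra.Polynomial"
begin

definition diagm :: "('n \<Rightarrow> complex) \<Rightarrow> complex^'n^'n" where
  "diagm d = (\<chi> i j. if i = j then d i else 0)"

lemma diagm_mult: "diagm a ** diagm b = diagm (\<lambda>i. a i * b i)"
  by (simp add: diagm_def matrix_matrix_mult_def vec_eq_iff if_distrib[of "\<lambda>x. x * _"] cong: if_cong)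

lemma mpow_diag: "mpow (diagm d) k = diagm (\<lambda>i. d i ^ k)"
  by (induction k) (simp_all add: diagm_mult, simp add: diagm_def mat_def)

lemma mexp_diag: "mexp (diagm d) = diagm (\<lambda>i. exp (d i))"
proof -
  have "(\<lambda>k. (1 / fact k) *\<^sub>R mpow (diagm d) k) sums diagm (\<lambda>i. exp (d i))"
    unfolding sums_def
  proof (rule vec_tendstoI, rule vec_tendstoI)
    fix i j
    show "((\<lambda>n. (\<Sum>k<n. (1 / fact k) *\<^sub>R mpow (diagm d) k) $ i $ j) \<longlongrightarrow> diagm (\<lambda>i. exp (d i)) $ i $ j) sequentially"
    proof (cases "i = j")
      case True
      have "(\<lambda>k. (d i)^k /\<^sub>R fact k) sums exp (d i)" by (rule exp_converges)
      then show ?thesis using True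
        by (simp only: mpow_diag) (simp add: diagm_def sums_def divide_inverse_commute)
    next
      case False
      then show ?thesis by (simp only: mpow_diag) (simp add: diagm_def)
    qed
  qed
  then show ?thesis unfolding mexp_def by (rule sums_unique[symmetric])
qed

definition Zf :: "real \<Rightarrow> complex \<Rightarrow> complex" where
  "Zf \<tau> \<zeta> = exp (- \<i> * of_real \<tau> * \<zeta> / 3)"

definition good :: "real \<Rightarrow> nat \<Rightarrow> (complex \<Rightarrow> cmat2) \<Rightarrow> bool" where
  "good \<tau> n F \<longleftrightarrow> (\<exists>P::complex poly^2^2. (\<forall>i j. degree (P$i$j) \<le> n) \<and>
     (\<forall>\<zeta>. F \<zeta> = cscale (inverse (Zf \<tau> \<zeta> ^ n)) (\<chi> i j. poly (P$i$j) (Zf \<tau> \<zeta> ^ 2))))"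

lemma cscale_mult: "cscale a X ** cscale b Y = cscale (a*b) (X ** Y)"
  by (simp add: cscale_def matrix_matrix_mult_def vec_eq_iff sum_distrib_left algebra_simps)

lemma poly_mat_mult:
  "(\<chi> i j. poly (P$i$j) w) ** (\<chi> i j. poly (Q$i$j) w) = (\<chi> i j. poly ((P ** Q)$i$j) w)"
  by (simp add: matrix_matrix_mult_def vec_eq_iff poly_sum)

lemma good_mult:
  assumes "good \<tau> n F" "good \<tau> m G"
  shows "good \<tau> (n+m) (\<lambda>\<zeta>. F \<zeta> ** G \<zeta>)"
proof -
  obtain P where P: "\<forall>i j. degree (P$i$j) \<le> n"
    "\<forall>\<zeta>. F \<zeta> = cscale (inverse (Zf \<tau> \<zeta> ^ n)) (\<chi> i j. poly (P$i$j) (Zf \<tau> \<zeta> ^ 2))"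
    using assms(1) unfolding good_def by blast
  obtain Q where Q: "\<forall>i j. degree (Q$i$j) \<le> m"
    "\<forall>\<zeta>. G \<zeta> = cscale (inverse (Zf \<tau> \<zeta> ^ m)) (\<chi> i j. poly (Q$i$j) (Zf \<tau> \<zeta> ^ 2))"
    using assms(2) unfolding good_def by blast
  have "degree ((P ** Q)$i$j) \<le> n + m" for i j
    unfolding matrix_matrix_mult_def
    by (simp, rule degree_sum_le) (auto intro: order.trans[OF degree_mult_le] add_mono P(1)[rule_format] Q(1)[rule_format])
  moreover have "F \<zeta> ** G \<zeta> = cscale (inverse (Zf \<tau> \<zeta> ^ (n+m))) (\<chi> i j. poly ((P**Q)$i$j) (Zf \<tau> \<zeta> ^ 2))" for \<zeta>
    by (simp add: P(2) Q(2) cscale_mult poly_mat_mult power_add mult.commute)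
  ultimately show ?thesis unfolding good_def by blast
qed

lemma good_const: "good \<tau> 0 (\<lambda>_. M)"
  unfolding good_def
  by (rule exI[of _ "\<chi> i j. [:M$i$j:]"]) (simp add: cscale_def vec_eq_iff)

lemma Zf_nz: "Zf \<tau> \<zeta> \<noteq> 0" by (simp add: Zf_def)

lemma good_diag:
  assumes "\<And>\<zeta>. F \<zeta> = diagm (\<lambda>i. if i = 1 then a \<zeta> else b \<zeta>)"
    and "\<And>\<zeta>. a \<zeta> * Zf \<tau> \<zeta> ^ n = poly pa (Zf \<tau> \<zeta> ^ 2)"
    and "\<And>\<zeta>. b \<zeta> * Zf \<tau> \<zeta> ^ n = poly pb (Zf \<tau> \<zeta> ^ 2)"
    and "degree pa \<le> n" "degree pb \<le> n"
  shows "good \<tau> n F"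
  unfolding good_def
proof (rule exI[of _ "\<chi> i j. if i = j then (if i = 1 then pa else pb) else 0"], intro conjI allI)
  fix i j :: 2 show "degree ((\<chi> i j. if i = j then (if i = 1 then pa else pb) else 0) $ i $ j) \<le> n"
    using assms(4,5) by auto
next
  fix \<zeta>
  have z: "Zf \<tau> \<zeta> ^ n \<noteq> 0" by (simp add: Zf_nz)
  show "F \<zeta> = cscale (inverse (Zf \<tau> \<zeta> ^ n)) (\<chi> i j. poly ((\<chi> i j. if i = j then (if i = 1 then pa else pb) else 0) $ i $ j) (Zf \<tau> \<zeta> ^ 2))"
    using z by (simp add: assms(1) diagm_def cscale_def vec_eq_iff assms(2)[symmetric] assms(3)[symmetric] field_simps)
qed

lemma matA_diag: "t *\<^sub>R matA \<zeta> = diagm (\<lambda>i. if i = 1 then of_real t * (- \<i> * \<zeta>) else of_real t * (\<i> * \<zeta>))"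
  unfolding matA_def diagm_def
  apply (rule iffD2[OF vec_eq_iff], rule allI, rule iffD2[OF vec_eq_iff], rule allI)
  subgoal for i j using exhaust_2[of i] exhaust_2[of j] apply auto by (auto simp: scaleR_conv_of_real)
  done

lemma mexpA: "mexp (t *\<^sub>R matA \<zeta>) = diagm (\<lambda>i. if i = 1 then exp (of_real t * (- \<i> * \<zeta>)) else exp (of_real t * (\<i> * \<zeta>)))"
  unfolding matA_diag mexp_diag by (simp add: if_distrib)


lemma e1: "exp (complex_of_real (1/3*\<tau>) * (- \<i> * \<zeta>)) = Zf \<tau> \<zeta>"
  unfolding Zf_def by (rule arg_cong[where f=exp]) (simp add: field_simps)
lemma e2: "exp (complex_of_real (1/3*\<tau>) * (\<i> * \<zeta>)) = inverse (Zf \<tau> \<zeta>)"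
  unfolding Zf_def exp_minus[symmetric] by (rule arg_cong[where f=exp]) (simp add: field_simps)
lemma e3: "exp (complex_of_real (-1/3*\<tau>) * (- \<i> * \<zeta>)) = inverse (Zf \<tau> \<zeta>)"
  unfolding Zf_def exp_minus[symmetric] by (rule arg_cong[where f=exp]) (simp add: field_simps)
lemma e4: "exp (complex_of_real (-1/3*\<tau>) * (\<i> * \<zeta>)) = Zf \<tau> \<zeta>"
  unfolding Zf_def by (rule arg_cong[where f=exp]) (simp add: field_simps)
lemma e5: "exp (complex_of_real \<tau> * (- \<i> * \<zeta>)) = Zf \<tau> \<zeta> ^ 3"
  unfolding Zf_def exp_of_nat_mult[symmetric] by (rule arg_cong[where f=exp]) (simp add: field_simps)
lemma e6: "exp (complex_of_real \<tau> * (\<i> * \<zeta>)) = inverse (Zf \<tau> \<zeta> ^ 3)"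
  unfolding Zf_def exp_of_nat_mult[symmetric] exp_minus[symmetric] by (rule arg_cong[where f=exp]) (simp add: field_simps)

lemma gA1: "good \<tau> 1 (\<lambda>\<zeta>. mexp ((1/3*\<tau>) *\<^sub>R matA \<zeta>))"
  by (rule good_diag[where a="\<lambda>\<zeta>. Zf \<tau> \<zeta>" and b="\<lambda>\<zeta>. inverse (Zf \<tau> \<zeta>)" and pa="[:0,1:]" and pb="[:1:]"])
     (simp only: mexpA e1 e2, auto simp: Zf_nz power2_eq_square)
lemma gA2: "good \<tau> 1 (\<lambda>\<zeta>. mexp ((-1/3*\<tau>) *\<^sub>R matA \<zeta>))"
  by (rule good_diag[where b="\<lambda>\<zeta>. Zf \<tau> \<zeta>" and a="\<lambda>\<zeta>. inverse (Zf \<tau> \<zeta>)" and pb="[:0,1:]" and pa="[:1:]"])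
     (simp only: mexpA e3 e4, auto simp: Zf_nz power2_eq_square)
lemma gA3: "good \<tau> 3 (\<lambda>\<zeta>. mexp (\<tau> *\<^sub>R matA \<zeta>))"
  by (rule good_diag[where a="\<lambda>\<zeta>. Zf \<tau> \<zeta> ^ 3" and b="\<lambda>\<zeta>. inverse (Zf \<tau> \<zeta> ^ 3)" and pa="monom 1 3" and pb="[:1:]"])
     (simp only: mexpA e5 e6, auto simp: Zf_nz poly_monom degree_monom_eq simp flip: power_add power_mult)

lemma poly_le: fixes p :: "complex poly" assumes "degree p \<le> n" shows "poly p x = (\<Sum>i\<le>n. coeff p i * x ^ i)"
proof -
  have "poly p x = (\<Sum>i\<le>degree p. coeff p i * x ^ i)" by (rule poly_altdef)
  also have "\<dots> = (\<Sum>i\<le>n. coeff p i * x ^ i)"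
    by (rule sum.mono_neutral_left) (use assms in \<open>auto simp: coeff_eq_0\<close>)
  finally show ?thesis .
qed

theorem mainTheorem2:
  fixes \<tau> :: real and q :: complex and \<sigma> :: real
  assumes "\<tau> > 0" and "\<sigma> \<in> {1, -1}"
  shows "\<exists>C :: nat \<Rightarrow> cmat2. \<forall>\<zeta> :: complex.
           (let Z = exp (- \<i> * of_real \<tau> * \<zeta> / 3); W = Z ^ 2 in
              prodP \<tau> \<zeta> q \<sigma> = cscale (inverse (Z ^ 7)) (\<Sum>k\<le>7. cscale (W ^ k) (C k)))"
proof -
  have "good \<tau> (0+1+0+1+0+3+0+1+0+1+0) (\<lambda>\<zeta>. prodP \<tau> \<zeta> q \<sigma>)"
    unfolding prodP_def
    by (intro good_mult good_const gA1 gA2 gA3)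
  then obtain P where P: "\<forall>i j. degree (P$i$j) \<le> 7"
    "\<forall>\<zeta>. prodP \<tau> \<zeta> q \<sigma> = cscale (inverse (Zf \<tau> \<zeta> ^ 7)) (\<chi> i j. poly (P$i$j) (Zf \<tau> \<zeta> ^ 2))"
    unfolding good_def by auto
  have "(\<chi> i j. poly (P$i$j) w) = (\<Sum>k\<le>7. cscale (w ^ k) (\<chi> i j. coeff (P$i$j) k))" for w
    by (simp add: vec_eq_iff cscale_def poly_le[OF P(1)[rule_format]] mult.commute)
  then show ?thesis unfolding Let_def
    by (intro exI[of _ "\<lambda>k. \<chi> i j. coeff (P$i$j) k"] allI) (simp add: P(2) Zf_def)
qed

end
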